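(* For all $\alpha,\beta\in[0,\frac12)$, the function $c_{\alpha,\beta}$ defined below is a.e. non-negative and has uniform marginals, i.e. $\int_0^1c_{\alpha,\beta}(u,v)\,dv=1$ for a.e. $u\in[0,1]$ and $\int_0^1c_{\alpha,\beta}(u,v)\,du=1$ for a.e. $v\in[0,1]$; hence it is the density of a bivariate copula $C_{\alpha,\beta}$.
   Context: Fix $\alpha,\beta\in[0,\frac12)$. Define $\varphi:[0,1]\to[0,1-\beta]$ by $\varphi(s)=0$ for $0\le s\le\alpha$, $\varphi(s)=\frac{1-\beta}{1-2\alpha}(s-\alpha)$ for $\alpha<s<1-\alpha$, and $\varphi(s)=1-\beta$ for $1-\alpha\le s\le1$. Let $H_{\alpha,\beta}=\{(s,t)\in[0,1]^2:\varphi(s)\le t\le\varphi(s)+\beta\}$, $L(t)=\int_0^1\mathbf{1}_{\{\varphi(s)\le t\le\varphi(s)+\beta\}}\,ds$, $f_T(t)=\frac{1-L(t)}{1-\beta}$ (a probability density on $[0,1]$), $F_T(v)=\int_0^vf_T(x)\,dx$ with quantile function $F_T^{-1}$, and \[ c_{\alpha,\beta}(u,v)=\frac{1}{(1-\beta)f_T(F_T^{-1}(v))}\,\mathbf{1}_{\{(u,F_T^{-1}(v))\notin H_{\alpha,\beta}\}},\qquad (u,v)\in[0,1]^2. \] *)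

theory Defs
  imports "HOL-Analysis.Analysis"
begin

definition phi :: "real \<Rightarrow> real \<Rightarrow> real \<Rightarrow> real" where
  "phi \<alpha> \<beta> s =
     (if s \<le> \<alpha> then 0
      else if s < 1 - \<alpha> then (1 - \<beta>) / (1 - 2 * \<alpha>) * (s - \<alpha>)
      else 1 - \<beta>)"

definition H :: "real \<Rightarrow> real \<Rightarrow> (real \<times> real) set" where
  "H \<alpha> \<beta> = {(s, t). s \<in> {0..1} \<and> t \<in> {0..1} \<and> phi \<alpha> \<beta> s \<le> t \<and> t \<le> phi \<alpha> \<beta> s + \<beta>}"

definition L :: "real \<Rightarrow> real \<Rightarrow> real \<Rightarrow> real" where
  "L \<alpha> \<beta> t = (LBINT s=0..1. indicator {s. phi \<alpha> \<beta> s \<le> t \<and> t \<le> phi \<alpha> \<beta> s + \<beta>} s)"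

definition fT :: "real \<Rightarrow> real \<Rightarrow> real \<Rightarrow> real" where
  "fT \<alpha> \<beta> t = (1 - L \<alpha> \<beta> t) / (1 - \<beta>)"

definition FT :: "real \<Rightarrow> real \<Rightarrow> real \<Rightarrow> real" where
  "FT \<alpha> \<beta> v = (LBINT x=0..v. fT \<alpha> \<beta> x)"

definition FT_inv :: "real \<Rightarrow> real \<Rightarrow> real \<Rightarrow> real" where
  "FT_inv \<alpha> \<beta> v = Inf {x \<in> {0..1}. v \<le> FT \<alpha> \<beta> x}"

definition cdens :: "real \<Rightarrow> real \<Rightarrow> real \<Rightarrow> real \<Rightarrow> real" where
  "cdens \<alpha> \<beta> u v =
     (if (u, FT_inv \<alpha> \<beta> v) \<notin> H \<alpha> \<beta>
      then 1 / ((1 - \<beta>) * fT \<alpha> \<beta> (FT_inv \<alpha> \<beta> v)) else 0)"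

definition is_copula :: "(real \<Rightarrow> real \<Rightarrow> real) \<Rightarrow> bool" where
  "is_copula C \<longleftrightarrow>
     (\<forall>u\<in>{0..1}. C u 0 = 0 \<and> C 0 u = 0 \<and> C u 1 = u \<and> C 1 u = u) \<and>
     (\<forall>u1\<in>{0..1}. \<forall>u2\<in>{0..1}. \<forall>v1\<in>{0..1}. \<forall>v2\<in>{0..1}.
        u1 \<le> u2 \<longrightarrow> v1 \<le> v2 \<longrightarrow> 0 \<le> C u2 v2 - C u2 v1 - C u1 v2 + C u1 v1)"

end

theory Submission
  imports Defs
begin

definition kk :: "real \<Rightarrow> real \<Rightarrow> real" where "kk a b = (1 - b) / (1 - 2 * a)"

definition Lx :: "real \<Rightarrow> real \<Rightarrow> real \<Rightarrow> real" where
 "Lx a b t = (if t < 0 then 0 else if t \<le> b then a + t / kk a b else if t < 1 - b then b / kk a b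
    else if t \<le> 1 then 1 - a - (t - b) / kk a b else 0)"

lemma lin_has_integral: fixes c d p q :: real assumes "c \<le> d"
  shows "((\<lambda>t. p + q * t) has_integral (p * (d - c) + q * (d^2 - c^2) / 2)) {c..d}"
proof -
  have "((\<lambda>t. p + q * t) has_integral ((p * d + q * d^2 / 2) - (p * c + q * c^2 / 2))) {c..d}"
    by (rule fundamental_theorem_of_calculus[OF assms])
       (auto intro!: derivative_eq_intros simp: has_real_derivative_iff_has_vector_derivative[symmetric])
  then show ?thesis by (simp add: algebra_simps diff_divide_distrib)
qed

locale ab = fixes a b :: real assumes a0: "0 \<le> a" and a1: "a < 1/2" and b0: "0 \<le> b" and b1: "b < 1/2"
begin

lemma k_pos: "kk a b > 0" using a1 b1 by (simp add: kk_def)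
lemma k_eq: "(1 - b) / kk a b = 1 - 2 * a" using a1 b1 by (simp add: kk_def)

lemma phi_alt: "phi a b s = (if s \<le> a then 0 else if s < 1 - a then kk a b * (s - a) else 1 - b)"
  by (simp add: phi_def kk_def)

lemma phi_range: "0 \<le> phi a b s" "phi a b s \<le> 1 - b"
proof -
  have k: "kk a b * (1 - 2*a) = 1 - b" using k_eq k_pos by (simp add: field_simps)
  show "0 \<le> phi a b s" using k_pos b1 by (auto simp: phi_alt)
  have "s < 1 - a \<Longrightarrow> kk a b * (s - a) \<le> kk a b * (1 - 2*a)" using k_pos by (intro mult_left_mono) auto
  then show "phi a b s \<le> 1 - b" using k b1 b0 by (auto simp: phi_alt)
qed

lemma phi_le_iff: assumes "0 \<le> x" "x < 1 - b" shows "phi a b s \<le> x \<longleftrightarrow> s \<le> a + x / kk a b"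
proof -
  have k: "kk a b > 0" "(1 - b) / kk a b = 1 - 2 * a" using k_pos k_eq by auto
  have xk: "x / kk a b < 1 - 2*a" using k assms by (metis divide_strict_right_mono)
  show ?thesis
  proof (cases "s \<le> a")
    case True
    have xk0: "x / kk a b \<ge> 0" using k assms by simp
    show ?thesis using True assms k by (simp add: phi_alt) (insert xk0, linarith)
  next
    case False
    show ?thesis
    proof (cases "s < 1 - a")
      case True
      have "kk a b * (s - a) \<le> x \<longleftrightarrow> s - a \<le> x / kk a b" using k by (simp add: field_simps)
      then show ?thesis using True False by (simp add: phi_alt) arith
    next
      case F2: False
      then show ?thesis using False xk assms by (simp add: phi_alt)
    qed
  qed
qed

lemma ge_phi_iff: assumes "0 < y" "y \<le> 1 - b" shows "y \<le> phi a b s \<longleftrightarrow> a + y / kk a b \<le> s"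
proof -
  have k: "kk a b > 0" "(1 - b) / kk a b = 1 - 2 * a" using k_pos k_eq by auto
  have xk: "y / kk a b \<le> 1 - 2*a" using k assms by (metis divide_right_mono less_imp_le)
  have yk: "y / kk a b > 0" using k assms by simp
  show ?thesis
  proof (cases "s \<le> a")
    case True then show ?thesis using assms k by (simp add: phi_alt) (insert yk, linarith)
  next
    case False
    show ?thesis
    proof (cases "s < 1 - a")
      case True
      have "y \<le> kk a b * (s - a) \<longleftrightarrow> y / kk a b \<le> s - a" using k by (simp add: field_simps)
      then show ?thesis using True False by (simp add: phi_alt) arith
    next
      case F2: False
      then show ?thesis using False xk assms by (simp add: phi_alt)
    qed
  qed
qed

definition St :: "real \<Rightarrow> real set" where "St t = {s. phi a b s \<le> t \<and> t \<le> phi a b s + b}"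

lemma phi_meas[measurable]: "phi a b \<in> borel_measurable borel"
  unfolding phi_def by measurable

lemma St_meas[measurable]: "St t \<in> sets borel"
  unfolding St_def by measurable

lemma St_Icc: "{0..1} \<inter> St t = (if t < 0 then {} else if t \<le> b then {0..a + t / kk a b}
   else if t < 1 - b then {a + (t - b) / kk a b .. a + t / kk a b}
   else if t \<le> 1 then {a + (t - b) / kk a b .. 1} else {})"
proof -
  have k: "kk a b > 0" "(1 - b) / kk a b = 1 - 2 * a" using k_pos k_eq by auto
  note pr = phi_range
  consider "t < 0" | "0 \<le> t" "t \<le> b" | "b < t" "t < 1 - b" | "1 - b \<le> t" "t \<le> 1" | "1 < t" by linarith
  then show ?thesis
  proof cases
    case 1
    have "{0..1} \<inter> St t = {}" unfolding St_def
      proof (auto)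
        fix x assume "phi a b x \<le> t" then show False using pr(1)[of x] 1 by linarith
      qed
    then show ?thesis using 1 by simp
  next
    case 2
    have tb: "t < 1 - b" using 2 b1 by linarith
    have "t / kk a b \<le> (1 - b) / kk a b" using tb k divide_right_mono[of t "1-b" "kk a b"] by linarith
    then have h: "a + t / kk a b \<le> 1" using k a0 by linarith
    have "{0..1} \<inter> St t = {s. 0 \<le> s \<and> s \<le> 1 \<and> s \<le> a + t / kk a b}"
    proof -
      have "\<And>s. t \<le> phi a b s + b" using pr(1) 2 by (metis add_increasing)
      then show ?thesis using phi_le_iff[OF 2(1) tb] unfolding St_def by auto
    qed
    also have "\<dots> = {0..a + t / kk a b}" using h by auto
    finally show ?thesis using 2 by simp
  next
    case 3
    have tb: "t < 1 - b" "0 \<le> t" "0 < t - b" "t - b \<le> 1 - b" using 3 b0 b1 by linarith+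
    have "t / kk a b \<le> (1 - b) / kk a b" using tb k divide_right_mono[of t "1-b" "kk a b"] by linarith
    then have h: "a + t / kk a b \<le> 1" using k a0 by linarith
    have h2: "0 \<le> a + (t - b) / kk a b" using k a0 tb by simp
    have "{0..1} \<inter> St t = {s. 0 \<le> s \<and> s \<le> 1 \<and> s \<le> a + t / kk a b \<and> a + (t - b) / kk a b \<le> s}"
      using phi_le_iff[OF tb(2) tb(1)] ge_phi_iff[OF tb(3) tb(4)] unfolding St_def by (auto simp: algebra_simps)
    also have "\<dots> = {a + (t - b) / kk a b .. a + t / kk a b}" using h h2 by auto
    finally show ?thesis using 3 b0 by simp
  next
    case 4
    have tb: "0 < t - b" "t - b \<le> 1 - b" using 4 b0 b1 by linarith+
    have h2: "0 \<le> a + (t - b) / kk a b" using k a0 tb by simp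
    have "{0..1} \<inter> St t = {s. 0 \<le> s \<and> s \<le> 1 \<and> a + (t - b) / kk a b \<le> s}"
    proof -
      have "\<And>s. phi a b s \<le> t" using pr(2) 4 by (metis order.trans)
      then show ?thesis using ge_phi_iff[OF tb(1) tb(2)] unfolding St_def by (auto simp: algebra_simps)
    qed
    also have "\<dots> = {a + (t - b) / kk a b .. 1}" using h2 by auto
    finally show ?thesis using 4 b1 by simp
  next
    case 5
    have e: "{0..1} \<inter> St t = {}" unfolding St_def
      proof (auto)
        fix x assume "t \<le> phi a b x + b" then show False using pr(2)[of x] 5 by linarith
      qed
    have "\<not> t < 0" "\<not> t \<le> b" "\<not> t < 1 - b" "\<not> t \<le> 1" using 5 b0 b1 by auto
    then show ?thesis using e by simp
  qed
qed

lemma L_eq_measure: "L a b t = measure lborel ({0..1} \<inter> St t)"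
proof -
  have "L a b t = (LINT s:{0..1}|lborel. indicator (St t) s)"
    using interval_integral_Icc[of 0 1 "indicator (St t)"] unfolding L_def St_def by (simp add: zero_ereal_def one_ereal_def)
  also have "\<dots> = integral\<^sup>L lborel (indicator ({0..1} \<inter> St t))"
    unfolding set_lebesgue_integral_def by (intro Bochner_Integration.integral_cong) (auto simp: indicator_def)
  also have "\<dots> = measure lborel ({0..1} \<inter> St t)" by simp
  finally show ?thesis .
qed

lemma L_eq: "L a b t = Lx a b t"
proof -
  have k: "kk a b > 0" using k_pos by auto
  consider "t < 0" | "0 \<le> t" "t \<le> b" | "b < t" "t < 1 - b" | "1 - b \<le> t" "t \<le> 1" | "1 < t" by linarith
  then show ?thesis
  proof cases
    case 1 then show ?thesis unfolding L_eq_measure St_Icc Lx_def by simp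
  next
    case 2
    have "0 \<le> a + t / kk a b" using k a0 2 by simp
    then show ?thesis using 2 unfolding L_eq_measure St_Icc Lx_def by simp
  next
    case 3
    have "(t - b) / kk a b \<le> t / kk a b" using k b0 by (intro divide_right_mono) auto
    moreover have "a + t / kk a b - (a + (t - b) / kk a b) = b / kk a b" using k by (simp add: field_simps)
    ultimately show ?thesis using 3 b0 unfolding L_eq_measure St_Icc Lx_def by simp
  next
    case 4
    then have "(t - b) / kk a b \<le> (1 - b) / kk a b" using k by (intro divide_right_mono) auto
    then have "a + (t - b) / kk a b \<le> 1" using k_eq a0 by linarith
    then show ?thesis using 4 b1 unfolding L_eq_measure St_Icc Lx_def by simp
  next
    case 5
    have "\<not> t < 0" "\<not> t \<le> b" "\<not> t < 1 - b" "\<not> t \<le> 1" using 5 b0 b1 by auto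
    then show ?thesis unfolding L_eq_measure St_Icc Lx_def by simp
  qed
qed


lemma Lx_meas[measurable]: "Lx a b \<in> borel_measurable borel"
  unfolding Lx_def by measurable

definition M where "M = a + b / kk a b"

lemma M_lt1: "M < 1"
proof -
  have "b / kk a b = b * (1 - 2*a) / (1 - b)" using a1 b1 by (simp add: kk_def)
  moreover have "b * (1 - 2*a) < (1 - a) * (1 - b)"
  proof -
    have "0 < (1 - 2*b) * (1 - a)" using a1 b1 by (intro mult_pos_pos) auto
    moreover have "0 \<le> a * b" using a0 b0 by simp
    ultimately have "0 < (1 - 2*b) * (1 - a) + a * b" by linarith
    then show ?thesis by (simp add: algebra_simps)
  qed
  ultimately have "b / kk a b < 1 - a" using b1 by (simp add: divide_less_eq)
  then show ?thesis unfolding M_def by simp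
qed

lemma Lx_bounds: "0 \<le> Lx a b t" "Lx a b t \<le> M"
proof -
  have k: "kk a b > 0" "(1 - b) / kk a b = 1 - 2 * a" using k_pos k_eq by auto
  consider "t < 0" | "0 \<le> t" "t \<le> b" | "b < t" "t < 1 - b" | "1 - b \<le> t" "t \<le> 1" | "1 < t" by linarith
  then have "0 \<le> Lx a b t \<and> Lx a b t \<le> M"
  proof cases
    case 1 then show ?thesis using a0 b0 k by (simp add: Lx_def M_def)
  next
    case 2
    have "t / kk a b \<le> b / kk a b" using 2 k by (intro divide_right_mono) auto
    then show ?thesis using 2 a0 b0 k by (simp add: Lx_def M_def)
  next
    case 3 then show ?thesis using a0 b0 k by (simp add: Lx_def M_def)
  next
    case 4
    have e1: "(t - b) / kk a b + b / kk a b = t / kk a b" using k by (simp add: field_simps)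
    have "(1 - b) / kk a b \<le> t / kk a b" using 4 k by (intro divide_right_mono) auto
    then have u: "1 - a - (t - b) / kk a b \<le> a + b / kk a b" using e1 k by linarith
    have "(t - b) / kk a b \<le> (1 - b) / kk a b" using 4 k by (intro divide_right_mono) auto
    then have l: "0 \<le> 1 - a - (t - b) / kk a b" using k a0 a1 by linarith
    have "\<not> t < 0" "\<not> t \<le> b" "\<not> t < 1 - b" using 4 b1 by auto
    then show ?thesis using u l 4 by (simp add: Lx_def M_def)
  next
    case 5
    have "\<not> t < 0" "\<not> t \<le> b" "\<not> t < 1 - b" "\<not> t \<le> 1" using 5 b0 b1 by auto
    then show ?thesis using a0 b0 k by (simp add: Lx_def M_def)
  qed
  then show "0 \<le> Lx a b t" "Lx a b t \<le> M" by auto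
qed

lemma Lx_integral: "(Lx a b has_integral b) {0..1}"
proof -
  define K where "K = kk a b"
  have K: "K > 0" using k_pos K_def by auto
  have i1: "(Lx a b has_integral (a * (b - 0) + (1/K) * (b^2 - 0^2) / 2)) {0..b}"
  proof (rule has_integral_spike_finite)
    show "((\<lambda>t. a + 1/K * t) has_integral (a * (b - 0) + (1/K) * (b^2 - 0^2) / 2)) {0..b}"
      by (rule lin_has_integral[OF b0])
    fix x assume "x \<in> {0..b} - {}" then show "Lx a b x = a + 1 / K * x" by (simp add: Lx_def K_def)
  qed simp
  have i2: "(Lx a b has_integral (b/K * ((1-b) - b) + 0 * ((1-b)^2 - b^2) / 2)) {b..1-b}"
  proof (rule has_integral_spike_finite)
    show "((\<lambda>t. b/K + 0 * t) has_integral (b/K * ((1-b) - b) + 0 * ((1-b)^2 - b^2) / 2)) {b..1-b}"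
      by (rule lin_has_integral) (use b1 in simp)
    fix x assume "x \<in> {b..1-b} - {b, 1-b}" then show "Lx a b x = b/K + 0 * x" using b0 by (simp add: Lx_def K_def)
  qed simp
  have i3: "(Lx a b has_integral ((1 - a + b/K) * (1 - (1-b)) + (-1/K) * (1^2 - (1-b)^2) / 2)) {1-b..1}"
  proof (rule has_integral_spike_finite)
    show "((\<lambda>t. (1 - a + b/K) + (-1/K) * t) has_integral ((1 - a + b/K) * (1 - (1-b)) + (-1/K) * (1^2 - (1-b)^2) / 2)) {1-b..1}"
      by (rule lin_has_integral) (use b0 in simp)
    fix x assume x: "x \<in> {1-b..1} - {1-b}"
    then have "\<not> x < 0" "\<not> x \<le> b" "\<not> x < 1 - b" "x \<le> 1" using b1 by auto
    then have "Lx a b x = 1 - a - (x - b) / K" by (simp add: Lx_def K_def)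
    also have "\<dots> = (1 - a + b/K) + (-1/K) * x" by (simp add: diff_divide_distrib)
    finally show "Lx a b x = (1 - a + b/K) + (-1/K) * x" .
  qed simp
  have i12: "(Lx a b has_integral ((a * (b - 0) + (1/K) * (b^2 - 0^2) / 2) + (b/K * ((1-b) - b) + 0 * ((1-b)^2 - b^2) / 2))) {0..1-b}"
    by (rule has_integral_combine[OF _ _ i1 i2]) (use b0 b1 in auto)
  have "(Lx a b has_integral ((a * (b - 0) + (1/K) * (b^2 - 0^2) / 2) + (b/K * ((1-b) - b) + 0 * ((1-b)^2 - b^2) / 2)
      + ((1 - a + b/K) * (1 - (1-b)) + (-1/K) * (1^2 - (1-b)^2) / 2))) {0..1}"
    by (rule has_integral_combine[OF _ _ i12 i3]) (use b0 b1 in auto)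
  moreover have "(a * (b - 0) + (1/K) * (b^2 - 0^2) / 2) + (b/K * ((1-b) - b) + 0 * ((1-b)^2 - b^2) / 2)
      + ((1 - a + b/K) * (1 - (1-b)) + (-1/K) * (1^2 - (1-b)^2) / 2) = b"
    using K by (simp add: field_simps power2_eq_square)
  ultimately show ?thesis by simp
qed

lemma Lx_isCont: assumes "t \<in> {0<..<1} - {b, 1-b}" shows "isCont (Lx a b) t"
proof -
  have t: "0 < t" "t < 1" "t \<noteq> b" "t \<noteq> 1 - b" using assms by auto
  consider "t \<in> {0<..<b}" | "t \<in> {b<..<1-b}" | "t \<in> {1-b<..<1}"
    unfolding greaterThanLessThan_iff using t by linarith
  then show ?thesis
  proof cases
    case 1
    have "continuous_on {0<..<b} (\<lambda>t. a + t / kk a b)" using k_pos by (intro continuous_intros) auto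
    then have "continuous_on {0<..<b} (Lx a b)"
      by (rule continuous_on_eq) (simp add: Lx_def)
    then show ?thesis using 1 continuous_on_eq_continuous_at[of "{0<..<b}" "Lx a b"] by auto
  next
    case 2
    have "continuous_on {b<..<1-b} (\<lambda>t. b / kk a b)" by (intro continuous_intros)
    then have "continuous_on {b<..<1-b} (Lx a b)"
      by (rule continuous_on_eq) (use b0 in \<open>simp add: Lx_def\<close>)
    then show ?thesis using 2 continuous_on_eq_continuous_at[of "{b<..<1-b}" "Lx a b"] by auto
  next
    case 3
    have "continuous_on {1-b<..<1} (\<lambda>t. 1 - a - (t - b) / kk a b)" using k_pos by (intro continuous_intros) auto
    then have "continuous_on {1-b<..<1} (Lx a b)"
      by (rule continuous_on_eq) (use b1 in \<open>simp add: Lx_def\<close>)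
    then show ?thesis using 3 continuous_on_eq_continuous_at[of "{1-b<..<1}" "Lx a b"] by auto
  qed
qed

end
context ab begin

lemma fT_eq: "fT a b t = (1 - Lx a b t) / (1 - b)"
  unfolding fT_def L_eq ..

definition c0 where "c0 = (1 - M) / (1 - b)"

lemma c0_pos: "c0 > 0" using M_lt1 b1 by (simp add: c0_def)

lemma fT_bounds: "c0 \<le> fT a b t" "fT a b t \<le> 1 / (1 - b)"
  using Lx_bounds[of t] b1 by (auto simp: fT_eq c0_def divide_right_mono)

lemma fT_meas[measurable]: "fT a b \<in> borel_measurable borel"
  unfolding fT_eq[abs_def] by measurable

lemma fT_int: "(fT a b has_integral 1) {0..1}"
proof -
  have "((\<lambda>t. (1 - Lx a b t) / (1 - b)) has_integral ((1 - b) / (1 - b))) {0..1}"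
    using has_integral_diff[OF has_integral_const_real[of 1 0 1] Lx_integral]
    by (intro has_integral_divide) simp
  then show ?thesis using b1 by (simp add: fT_eq[abs_def])
qed

lemma fT_integrable: "{x..y} \<subseteq> {0..1} \<Longrightarrow> fT a b integrable_on {x..y}"
  using fT_int integrable_on_subinterval by blast

lemma fT_isCont: "t \<in> {0<..<1} - {b, 1-b} \<Longrightarrow> isCont (fT a b) t"
  unfolding fT_eq[abs_def] using Lx_isCont b1 by (intro continuous_intros) auto

lemma fT_set_integrable: "set_integrable lborel {0..v} (fT a b)"
  unfolding set_integrable_def
proof (rule integrableI_bounded_set_indicator[where B="1/(1-b)"])
  show "emeasure lborel {0..v} < \<infinity>" by (simp add: emeasure_lborel_Icc_eq)
  show "AE x in lborel. x \<in> {0..v} \<longrightarrow> norm (fT a b x) \<le> 1 / (1 - b)"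
  proof (intro AE_I2 impI)
    fix x
    have "0 \<le> fT a b x" using fT_bounds(1)[of x] c0_pos by linarith
    then show "norm (fT a b x) \<le> 1 / (1 - b)" using fT_bounds(2)[of x] by simp
  qed
qed auto

lemma FT_eq: "0 \<le> v \<Longrightarrow> FT a b v = integral {0..v} (fT a b)"
  unfolding FT_def using interval_integral_eq_integral[of 0 v "fT a b"] fT_set_integrable[of v]
  by (simp add: zero_ereal_def)

lemma FT_cont: "continuous_on {0..1} (FT a b)"
  using indefinite_integral_continuous_1[OF fT_int[THEN has_integral_integrable]]
  by (rule continuous_on_eq) (simp add: FT_eq)

lemma FT_diff: assumes "0 \<le> x" "x \<le> y" "y \<le> 1"
  shows "FT a b y - FT a b x = integral {x..y} (fT a b)" "c0 * (y - x) \<le> FT a b y - FT a b x"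
proof -
  have "integral {0..x} (fT a b) + integral {x..y} (fT a b) = integral {0..y} (fT a b)"
    by (rule Henstock_Kurzweil_Integration.integral_combine) (use assms fT_integrable in auto)
  then show e: "FT a b y - FT a b x = integral {x..y} (fT a b)" using assms by (simp add: FT_eq)
  have "integral {x..y} (\<lambda>_. c0) \<le> integral {x..y} (fT a b)"
    by (rule integral_le) (use assms fT_integrable fT_bounds in auto)
  then show "c0 * (y - x) \<le> FT a b y - FT a b x" using e assms by (simp add: mult.commute)
qed

lemma FT0: "FT a b 0 = 0" by (simp add: FT_eq)
lemma FT1: "FT a b 1 = 1" using fT_int by (simp add: FT_eq integral_unique)

lemma FT_strict: "0 \<le> x \<Longrightarrow> x < y \<Longrightarrow> y \<le> 1 \<Longrightarrow> FT a b x < FT a b y"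
  using FT_diff[of x y] c0_pos by (smt (verit) mult_pos_pos)

lemma FT_le_iff: "x \<in> {0..1} \<Longrightarrow> y \<in> {0..1} \<Longrightarrow> FT a b x \<le> FT a b y \<longleftrightarrow> x \<le> y"
  using FT_strict[of x y] FT_strict[of y x] by (cases x y rule: linorder_cases) auto

lemma FT_range: "x \<in> {0..1} \<Longrightarrow> FT a b x \<in> {0..1}"
  using FT_le_iff[of 0 x] FT_le_iff[of x 1] FT0 FT1 by auto

lemma FT_surj: "v \<in> {0..1} \<Longrightarrow> \<exists>x\<in>{0..1}. FT a b x = v"
  using IVT'[of "FT a b" 0 v 1] FT0 FT1 FT_cont by auto

lemma Fi_FT: assumes "x \<in> {0..1}" shows "FT_inv a b (FT a b x) = x"
proof -
  have "{y \<in> {0..1}. FT a b x \<le> FT a b y} = {x..1}" using FT_le_iff assms by auto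
  then show ?thesis unfolding FT_inv_def using assms by simp
qed

lemma FT_Fi: assumes "v \<in> {0..1}" shows "FT a b (FT_inv a b v) = v" "FT_inv a b v \<in> {0..1}"
  using FT_surj[OF assms] Fi_FT by auto

lemma FT_image: "FT a b ` {0..1} = {0..1}"
  using FT_range FT_surj by blast

lemma Fi_cont: "continuous_on {0..1} (FT_inv a b)"
  using continuous_on_inv[OF FT_cont compact_Icc, of "FT_inv a b"] Fi_FT FT_image by simp

lemma Fi_le_iff: "v \<in> {0..1} \<Longrightarrow> w \<in> {0..1} \<Longrightarrow> FT_inv a b v \<le> FT_inv a b w \<longleftrightarrow> v \<le> w"
  using FT_le_iff[OF FT_Fi(2) FT_Fi(2), of v w] FT_Fi(1)[of v] FT_Fi(1)[of w] by simp

lemma FT_deriv: assumes t: "t \<in> {0<..<1} - {b, 1-b}" shows "(FT a b has_real_derivative fT a b t) (at t)"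
proof -
  have "((\<lambda>u. integral {0..u} (fT a b)) has_vector_derivative fT a b t) (at t within ({0..1} - {b, 1-b}))"
    by (rule integral_has_vector_derivative_continuous_at)
       (use t fT_int[THEN has_integral_integrable] fT_isCont[OF t] in \<open>auto intro: continuous_at_imp_continuous_within\<close>)
  moreover have "at t within ({0..1} - {b, 1-b}) = at t"
  proof (rule at_within_interior)
    have "open ({0<..<1} - {b, 1-b})" by (intro open_Diff) auto
    moreover have "{0<..<1} - {b, 1-b} \<subseteq> {0..1} - {b, 1-b}" by auto
    ultimately show "t \<in> interior ({0..1} - {b, 1-b})" using t interior_maximal by blast
  qed
  ultimately have "((\<lambda>u. integral {0..u} (fT a b)) has_real_derivative fT a b t) (at t)"
    by (simp add: has_real_derivative_iff_has_vector_derivative)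
  then show ?thesis
  proof (rule has_field_derivative_transform_within_open[where S="{0<..<1}"])
    show "t \<in> {0<..<1}" using t by auto
  qed (auto simp: FT_eq)
qed

lemma Fi_deriv: assumes v: "v \<in> {0<..<1} - {FT a b b, FT a b (1-b)}"
  shows "(FT_inv a b has_real_derivative inverse (fT a b (FT_inv a b v))) (at v)"
proof -
  have v01: "v \<in> {0..1}" using v by auto
  define t where "t = FT_inv a b v"
  have t01: "t \<in> {0..1}" and Ft: "FT a b t = v" using FT_Fi[OF v01] t_def by auto
  have "t \<noteq> 0" using Ft FT0 v by auto
  moreover have "t \<noteq> 1" using Ft FT1 v by auto
  moreover have "t \<noteq> b" "t \<noteq> 1 - b" using Ft v by auto
  ultimately have t': "t \<in> {0<..<1} - {b, 1-b}" using t01 by auto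
  show ?thesis unfolding t_def[symmetric]
  proof (rule DERIV_inverse_function[where a=0 and b=1])
    show "(FT a b has_real_derivative fT a b t) (at (FT_inv a b v))" using FT_deriv[OF t'] t_def by simp
    show "fT a b t \<noteq> 0" using fT_bounds(1)[of t] c0_pos by linarith
    show "0 < v" "v < 1" using v by auto
    show "\<And>y. 0 < y \<Longrightarrow> y < 1 \<Longrightarrow> FT a b (FT_inv a b y) = y" using FT_Fi by auto
    show "isCont (FT_inv a b) v"
      using continuous_on_interior[OF Fi_cont, of v] v by auto
  qed
qed

lemma K_int: assumes "0 \<le> x" "x \<le> y" "y \<le> 1"
  shows "((\<lambda>v. inverse (fT a b (FT_inv a b v))) has_integral (FT_inv a b y - FT_inv a b x)) {x..y}"
proof (rule fundamental_theorem_of_calculus_interior_strong[of "{FT a b b, FT a b (1-b)}"])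
  show "continuous_on {x..y} (FT_inv a b)" using Fi_cont by (rule continuous_on_subset) (use assms in auto)
  fix z assume "z \<in> {x<..<y} - {FT a b b, FT a b (1-b)}"
  then have "z \<in> {0<..<1} - {FT a b b, FT a b (1-b)}" using assms by auto
  then show "(FT_inv a b has_vector_derivative inverse (fT a b (FT_inv a b z))) (at z)"
    using Fi_deriv has_real_derivative_iff_has_vector_derivative by blast
qed (use assms in auto)

lemma conv_lborel:
  fixes g :: "real \<Rightarrow> real"
  assumes meas: "(\<lambda>x. indicator {0..1} x * g x) \<in> borel_measurable lborel"
    and nn: "\<And>x. x \<in> {0..1} \<Longrightarrow> 0 \<le> g x" and I: "(g has_integral I) {0..1}"
  shows "set_integrable lborel {0..1} g \<and> (LINT x:{0..1}|lborel. g x) = I"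
proof -
  have I0: "0 \<le> I" using has_integral_nonneg[OF I nn] by simp
  have N: "integral\<^sup>N lborel (\<lambda>x. indicator {0..1} x * g x) = ennreal I"
    using nn_integral_has_integral_lebesgue[OF nn I] by simp
  have nn': "AE x in lborel. 0 \<le> indicator {0..1} x * g x"
    using nn by (intro AE_I2) (auto simp: indicator_def)
  have "integrable lborel (\<lambda>x. indicator {0..1} x * g x)"
    by (rule integrableI_nn_integral_finite[OF meas nn' N])
  moreover have "integral\<^sup>L lborel (\<lambda>x. indicator {0..1} x * g x) = I"
    using integral_eq_nn_integral[OF meas nn'] N I0 by simp
  ultimately show ?thesis unfolding set_integrable_def set_lebesgue_integral_def by simp
qed

definition Fc where "Fc v = FT_inv a b (max 0 (min 1 v))"

lemma Fc_cont: "continuous_on UNIV Fc"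
proof -
  have "continuous_on UNIV (\<lambda>v. max 0 (min 1 v) :: real)" by (intro continuous_intros)
  then show ?thesis unfolding Fc_def
    by (rule continuous_on_compose2[OF Fi_cont]) auto
qed

lemma Fc_meas[measurable]: "Fc \<in> borel_measurable borel"
  by (rule borel_measurable_continuous_onI[OF Fc_cont])

lemma Fc_eq: "v \<in> {0..1} \<Longrightarrow> Fc v = FT_inv a b v"
  by (simp add: Fc_def)

definition G where "G u t = (if (u, t) \<notin> H a b then 1 / ((1 - b) * fT a b t) else 0)"

lemma G_meas0: "(\<lambda>p. G (fst p) (snd p)) \<in> borel_measurable (borel \<Otimes>\<^sub>M borel)"
proof -
  have e: "(\<lambda>p. G (fst p) (snd p)) = (\<lambda>p. if \<not> (fst p \<in> {0..1} \<and> snd p \<in> {0..1} \<and> phi a b (fst p) \<le> snd p \<and> snd p \<le> phi a b (fst p) + b)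
     then 1 / ((1 - b) * fT a b (snd p)) else 0)"
    by (auto simp: G_def H_def fun_eq_iff)
  show ?thesis unfolding e by measurable
qed

lemma G_meas[measurable]: "(\<lambda>p. G (fst p) (snd p)) \<in> borel_measurable borel"
  using G_meas0 by (simp add: borel_prod)

lemma cdens_G: "v \<in> {0..1} \<Longrightarrow> cdens a b u v = G u (Fc v)"
  by (simp add: cdens_def G_def Fc_eq)

lemma cdens_nonneg: "0 \<le> cdens a b u v"
proof -
  have "0 < fT a b (FT_inv a b v)" using fT_bounds(1) c0_pos by (rule order.strict_trans2[rotated])
  then show ?thesis using b1 by (simp add: cdens_def)
qed

lemma cdens_bound: "cdens a b u v \<le> 1 / ((1 - b) * c0)"
proof -
  have "c0 \<le> fT a b (FT_inv a b v)" by (rule fT_bounds(1))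
  then have "(1 - b) * c0 \<le> (1 - b) * fT a b (FT_inv a b v)" using b1 by simp
  then show ?thesis using b1 c0_pos by (simp add: cdens_def frac_le)
qed

lemma marg_v: assumes u: "u \<in> {0..1}"
  shows "set_integrable lborel {0..1} (\<lambda>v. cdens a b u v) \<and> (LINT v:{0..1}|lborel. cdens a b u v) = 1"
proof (rule conv_lborel)
  define P where "P = phi a b u"
  define Q where "Q = P + b"
  have P: "0 \<le> P" "P \<le> 1 - b" using phi_range P_def by auto
  then have PQ: "P \<in> {0..1}" "Q \<in> {0..1}" "P \<le> Q" using b0 b1 Q_def by auto
  define p where "p = FT a b P"
  define q where "q = FT a b Q"
  have pq: "p \<in> {0..1}" "q \<in> {0..1}" "p \<le> q" using FT_range FT_le_iff PQ p_def q_def by auto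
  have Fpq: "FT_inv a b p = P" "FT_inv a b q = Q" using Fi_FT PQ p_def q_def by auto
  define r where "r v = inverse (fT a b (FT_inv a b v)) / (1 - b)" for v
  have F01: "FT_inv a b 0 = 0" "FT_inv a b 1 = 1" using Fi_FT[of 0] Fi_FT[of 1] FT0 FT1 by auto
  have i1: "(r has_integral (1 / (1 - b))) {0..1}"
    unfolding r_def using has_integral_divide[OF K_int[of 0 1], of "1 - b"] F01 by simp
  have i2: "(r has_integral ((Q - P) / (1 - b))) {p..q}"
    unfolding r_def using has_integral_divide[OF K_int[of p q], of "1 - b"] Fpq pq by simp
  then have i2': "((\<lambda>v. if v \<in> {p..q} then r v else 0) has_integral ((Q - P) / (1 - b))) {0..1}"
    using pq by (subst has_integral_restrict) auto
  have i3: "((\<lambda>v. r v - (if v \<in> {p..q} then r v else 0)) has_integral (1 / (1 - b) - (Q - P) / (1 - b))) {0..1}"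
    by (rule has_integral_diff[OF i1 i2'])
  have val: "1 / (1 - b) - (Q - P) / (1 - b) = 1" using b1 Q_def by (simp add: field_simps)
  show "((\<lambda>v. cdens a b u v) has_integral 1) {0..1}"
  proof (rule has_integral_eq[OF _ i3[unfolded val]])
    fix v :: real assume v: "v \<in> {0..1}"
    have t: "FT_inv a b v \<in> {0..1}" using FT_Fi(2)[OF v] .
    have "(u, FT_inv a b v) \<in> H a b \<longleftrightarrow> P \<le> FT_inv a b v \<and> FT_inv a b v \<le> Q"
      using u t unfolding H_def P_def Q_def by auto
    also have "\<dots> \<longleftrightarrow> p \<le> v \<and> v \<le> q"
      using Fi_le_iff[OF pq(1) v] Fi_le_iff[OF v pq(2)] Fpq by simp
    finally have "(u, FT_inv a b v) \<in> H a b \<longleftrightarrow> v \<in> {p..q}" by simp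
    then show "r v - (if v \<in> {p..q} then r v else 0) = cdens a b u v"
      unfolding cdens_def r_def by (simp add: divide_inverse mult.commute)
  qed
  have m: "(\<lambda>x. (u, Fc x)) \<in> borel \<rightarrow>\<^sub>M borel \<Otimes>\<^sub>M borel" by measurable
  have "(\<lambda>x. G u (Fc x)) \<in> borel_measurable borel"
    using measurable_compose[OF m G_meas0] by simp
  then have "(\<lambda>v. indicator {0..1} v * G u (Fc v)) \<in> borel_measurable lborel" by measurable
  moreover have "(\<lambda>v. indicator {0..1} v * cdens a b u v) = (\<lambda>v. indicator {0..1} v * G u (Fc v))"
    by (auto simp: fun_eq_iff indicator_def cdens_G)
  ultimately show "(\<lambda>v. indicator {0..1} v * cdens a b u v) \<in> borel_measurable lborel" by simp
qed (rule cdens_nonneg)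

lemma marg_u:
  shows "set_integrable lborel {0..1} (\<lambda>u. cdens a b u v) \<and> (LINT u:{0..1}|lborel. cdens a b u v) = 1"
proof -
  define t where "t = FT_inv a b v"
  define h where "h = 1 / ((1 - b) * fT a b t)"
  have Hiff: "(u, t) \<in> H a b \<longleftrightarrow> u \<in> St t" if "u \<in> {0..1}" for u
  proof -
    have "phi a b u \<le> t \<and> t \<le> phi a b u + b \<Longrightarrow> t \<in> {0..1}"
      using phi_range[of u] by auto
    then show ?thesis using that unfolding H_def St_def by auto
  qed
  have eq: "(\<lambda>u. indicator {0..1} u * cdens a b u v) = (\<lambda>u. h * indicator {0..1} u - h * indicator ({0..1} \<inter> St t) u)"
    by (auto simp: fun_eq_iff indicator_def cdens_def h_def t_def[symmetric] Hiff)
  have "emeasure lborel ({0..1} \<inter> St t) \<le> 1"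
    using emeasure_mono[of "{0..1} \<inter> St t" "{0..1::real}" lborel] by (simp add: emeasure_lborel_Icc_eq)
  then have fin: "emeasure lborel ({0..1} \<inter> St t) < \<infinity>"
    using le_less_trans ennreal_one_less_top by (metis infinity_ennreal_def)
  have int1: "integrable lborel (\<lambda>u. h * indicator {0..1} u - h * indicator ({0..1} \<inter> St t) u)"
    using fin by (intro Bochner_Integration.integrable_diff integrable_mult_right integrable_real_indicator) (auto simp: emeasure_lborel_Icc_eq)
  have "integral\<^sup>L lborel (\<lambda>u. h * indicator {0..1} u - h * indicator ({0..1} \<inter> St t) u)
      = h * measure lborel {0..1::real} - h * measure lborel ({0..1} \<inter> St t)"
    using fin by (subst Bochner_Integration.integral_diff) (auto intro!: integrable_mult_right integrable_real_indicator simp: emeasure_lborel_Icc_eq)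
  also have "\<dots> = h * (1 - L a b t)" by (simp add: L_eq_measure algebra_simps)
  also have "\<dots> = 1"
  proof -
    have "L a b t < 1" using Lx_bounds(2)[of t] M_lt1 L_eq by simp
    then show ?thesis using b1 by (simp add: h_def fT_def)
  qed
  finally show ?thesis using int1 eq unfolding set_integrable_def set_lebesgue_integral_def by simp
qed

lemma cc_meas: "(\<lambda>p. indicator ({0..1} \<times> {0..1}) p * cdens a b (fst p) (snd p)) \<in> borel_measurable borel"
proof -
  have m: "(\<lambda>p. (fst p, Fc (snd p))) \<in> borel \<Otimes>\<^sub>M borel \<rightarrow>\<^sub>M borel \<Otimes>\<^sub>M borel" by measurable
  have "(\<lambda>p. G (fst p) (Fc (snd p))) \<in> borel_measurable (borel \<Otimes>\<^sub>M borel)"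
    using measurable_compose[OF m G_meas0] by simp
  then have g: "(\<lambda>p::real\<times>real. G (fst p) (Fc (snd p))) \<in> borel_measurable borel" by (simp add: borel_prod)
  have S: "({0..1} \<times> {0..1} :: (real \<times> real) set) \<in> sets borel" by (intro borel_closed closed_Times) auto
  have "(\<lambda>p::real\<times>real. indicator ({0..1} \<times> {0..1}) p * G (fst p) (Fc (snd p))) \<in> borel_measurable borel"
    by (rule borel_measurable_times[OF borel_measurable_indicator[OF S] g])
  moreover have "(\<lambda>p. indicator ({0..1} \<times> {0..1}) p * cdens a b (fst p) (snd p))
     = (\<lambda>p::real\<times>real. indicator ({0..1} \<times> {0..1}) p * G (fst p) (Fc (snd p)))"
    by (auto simp: fun_eq_iff indicator_def cdens_G mem_Times_iff)
  ultimately show ?thesis by simp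
qed

lemma cc_int: "set_integrable lborel ({0..1} \<times> {0..1}) (\<lambda>p. cdens a b (fst p) (snd p))"
  unfolding set_integrable_def
proof (rule integrableI_bounded_set[where A="{0..1} \<times> {0..1}" and B="1 / ((1 - b) * c0)"])
  show "({0..1} \<times> {0..1} :: (real \<times> real) set) \<in> sets lborel" by (simp, intro borel_closed closed_Times) auto
  show "(\<lambda>x. indicator ({0..1} \<times> {0..1}) x *\<^sub>R cdens a b (fst x) (snd x)) \<in> borel_measurable lborel"
    using cc_meas by simp
  have "emeasure (lborel \<Otimes>\<^sub>M lborel) ({0..1::real} \<times> {0..1::real}) = emeasure lborel {0..1::real} * emeasure lborel {0..1::real}"
    by (rule lborel.emeasure_pair_measure_Times) auto
  then have "emeasure lborel ({0..1::real} \<times> {0..1::real}) = 1" by (simp add: lborel_prod)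
  then show "emeasure lborel ({0..1::real} \<times> {0..1::real}) < \<infinity>" by simp
  show "AE x in lborel. x \<in> {0..1} \<times> {0..1} \<longrightarrow> norm (indicator ({0..1} \<times> {0..1}) x *\<^sub>R cdens a b (fst x) (snd x)) \<le> 1 / ((1 - b) * c0)"
    using cdens_nonneg cdens_bound by (intro AE_I2) (auto simp: indicator_def)
  show "AE x in lborel. x \<notin> {0..1} \<times> {0..1} \<longrightarrow> indicator ({0..1} \<times> {0..1}) x *\<^sub>R cdens a b (fst x) (snd x) = 0"
    by (intro AE_I2) (auto simp: indicator_def)
qed

lemma cc_int_sub: assumes "u \<in> {0..1}" "v \<in> {0..1}"
  shows "integrable lborel (\<lambda>p. indicator ({0..u} \<times> {0..v}) p * cdens a b (fst p) (snd p))"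
proof -
  have "set_integrable lborel ({0..u} \<times> {0..v}) (\<lambda>p. cdens a b (fst p) (snd p))"
    by (rule set_integrable_subset[OF cc_int]) (use assms in \<open>auto intro!: borel_closed closed_Times\<close>)
  then show ?thesis unfolding set_integrable_def by simp
qed

lemma C_fst: assumes "u \<in> {0..1}" "v \<in> {0..1}"
  shows "(LINT p:{0..u} \<times> {0..v}|lborel. cdens a b (fst p) (snd p))
       = (\<integral>x. indicator {0..u} x * (LINT y:{0..v}|lborel. cdens a b x y) \<partial>lborel)"
proof -
  define F where "F p = indicator ({0..u} \<times> {0..v}) p * cdens a b (fst p) (snd p)" for p :: "real \<times> real"
  have iF: "integrable (lborel \<Otimes>\<^sub>M lborel) F" using cc_int_sub[OF assms] by (simp add: F_def[abs_def] lborel_prod)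
  have "(LINT p:{0..u} \<times> {0..v}|lborel. cdens a b (fst p) (snd p)) = integral\<^sup>L (lborel \<Otimes>\<^sub>M lborel) F"
    by (simp add: set_lebesgue_integral_def F_def[abs_def] lborel_prod)
  also have "\<dots> = (\<integral>x. (\<integral>y. F (x, y) \<partial>lborel) \<partial>lborel)" by (rule lborel_pair.integral_fst'[OF iF, symmetric])
  also have "\<dots> = (\<integral>x. indicator {0..u} x * (LINT y:{0..v}|lborel. cdens a b x y) \<partial>lborel)"
    by (intro Bochner_Integration.integral_cong refl)
       (simp add: F_def set_lebesgue_integral_def indicator_times mult.assoc)
  finally show ?thesis .
qed

lemma C_snd: assumes "u \<in> {0..1}" "v \<in> {0..1}"
  shows "(LINT p:{0..u} \<times> {0..v}|lborel. cdens a b (fst p) (snd p))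
       = (\<integral>y. indicator {0..v} y * (LINT x:{0..u}|lborel. cdens a b x y) \<partial>lborel)"
proof -
  define f where "f x y = indicator ({0..u} \<times> {0..v}) (x, y) * cdens a b x y" for x y :: real
  have cp: "case_prod f = (\<lambda>p. indicator ({0..u} \<times> {0..v}) p * cdens a b (fst p) (snd p))"
    by (auto simp: fun_eq_iff f_def)
  have iF: "integrable (lborel \<Otimes>\<^sub>M lborel) (case_prod f)" using cc_int_sub[OF assms] by (simp add: cp lborel_prod)
  have "(LINT p:{0..u} \<times> {0..v}|lborel. cdens a b (fst p) (snd p)) = integral\<^sup>L (lborel \<Otimes>\<^sub>M lborel) (case_prod f)"
    by (simp add: set_lebesgue_integral_def cp lborel_prod)
  also have "\<dots> = (\<integral>y. (\<integral>x. f x y \<partial>lborel) \<partial>lborel)" by (rule lborel_pair.integral_snd[OF iF, symmetric])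
  also have "\<dots> = (\<integral>y. indicator {0..v} y * (LINT x:{0..u}|lborel. cdens a b x y) \<partial>lborel)"
  proof (intro Bochner_Integration.integral_cong refl)
    fix y
    have "(\<lambda>x. f x y) = (\<lambda>x. indicator {0..v} y * (indicator {0..u} x *\<^sub>R cdens a b x y))"
      by (auto simp: f_def indicator_def fun_eq_iff)
    then show "(\<integral>x. f x y \<partial>lborel) = indicator {0..v} y * (LINT x:{0..u}|lborel. cdens a b x y)"
      by (simp add: set_lebesgue_integral_def)
  qed
  finally show ?thesis .
qed

lemma LINT_00: fixes g :: "real \<Rightarrow> real" shows "(LINT y:{0..0}|lborel. g y) = 0"
proof -
  have "(\<lambda>y. indicator {0..0} y *\<^sub>R g y) = (\<lambda>y. g 0 * indicator {0..0::real} y)"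
    by (auto simp: fun_eq_iff indicator_def)
  then show ?thesis unfolding set_lebesgue_integral_def by simp
qed

lemma C_def': "(LINT p:R|lborel. cdens a b (fst p) (snd p)) = integral\<^sup>L lborel (\<lambda>p. indicator R p * cdens a b (fst p) (snd p))"
  by (simp add: set_lebesgue_integral_def)

lemma is_cop: "is_copula (\<lambda>u v. LINT p:{0..u} \<times> {0..v}|lborel. cdens a b (fst p) (snd p))"
  unfolding is_copula_def
proof (intro conjI ballI impI)
  fix u :: real assume u: "u \<in> {0..1}"
  have z: "{0..0::real} \<subseteq> {0..1}" "(0::real) \<in> {0..1}" "(1::real) \<in> {0..1}" by auto
  show "(LINT p:{0..u} \<times> {0..0}|lborel. cdens a b (fst p) (snd p)) = 0"
    unfolding C_fst[OF u z(2)] LINT_00 by simp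
  show "(LINT p:{0..0} \<times> {0..u}|lborel. cdens a b (fst p) (snd p)) = 0"
    unfolding C_snd[OF z(2) u] LINT_00 by simp
  have "(\<integral>x. indicator {0..u} x * (LINT y:{0..1}|lborel. cdens a b x y) \<partial>lborel) = (\<integral>x. indicator {0..u} x \<partial>lborel)"
  proof (intro Bochner_Integration.integral_cong refl)
    fix x show "indicator {0..u} x * (LINT y:{0..1}|lborel. cdens a b x y) = indicator {0..u} x"
      using marg_v[of x] u by (cases "x \<in> {0..u}") auto
  qed
  then show "(LINT p:{0..u} \<times> {0..1}|lborel. cdens a b (fst p) (snd p)) = u"
    unfolding C_fst[OF u z(3)] using u by simp
  have "(\<integral>y. indicator {0..u} y * (LINT x:{0..1}|lborel. cdens a b x y) \<partial>lborel) = (\<integral>y. indicator {0..u} y \<partial>lborel)"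
    using marg_u by simp
  then show "(LINT p:{0..1} \<times> {0..u}|lborel. cdens a b (fst p) (snd p)) = u"
    unfolding C_snd[OF z(3) u] using u by simp
next
  fix u1 u2 v1 v2 :: real
  assume h: "u1 \<in> {0..1}" "u2 \<in> {0..1}" "v1 \<in> {0..1}" "v2 \<in> {0..1}" "u1 \<le> u2" "v1 \<le> v2"
  define c where "c p = cdens a b (fst p) (snd p)" for p :: "real \<times> real"
  define R where "R u v = ({0..u} \<times> {0..v} :: (real \<times> real) set)" for u v :: real
  define f where "f u v p = indicator (R u v) p * c p" for u v p
  have i: "integrable lborel (f u v)" if "u \<in> {0..1}" "v \<in> {0..1}" for u v
    using cc_int_sub[OF that] by (simp add: f_def[abs_def] R_def c_def)
  have "(LINT p:{0..u2} \<times> {0..v2}|lborel. cdens a b (fst p) (snd p)) -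
       (LINT p:{0..u2} \<times> {0..v1}|lborel. cdens a b (fst p) (snd p)) -
       (LINT p:{0..u1} \<times> {0..v2}|lborel. cdens a b (fst p) (snd p)) +
       (LINT p:{0..u1} \<times> {0..v1}|lborel. cdens a b (fst p) (snd p))
     = integral\<^sup>L lborel (f u2 v2) - integral\<^sup>L lborel (f u2 v1) - integral\<^sup>L lborel (f u1 v2) + integral\<^sup>L lborel (f u1 v1)"
    unfolding C_def' f_def[abs_def] R_def c_def by simp
  also have "\<dots> = integral\<^sup>L lborel (\<lambda>p. f u2 v2 p - f u2 v1 p - f u1 v2 p + f u1 v1 p)"
    using i h by (simp add: Bochner_Integration.integral_add Bochner_Integration.integral_diff
        Bochner_Integration.integrable_diff)
  also have "\<dots> \<ge> 0"
  proof (rule Bochner_Integration.integral_nonneg)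
    fix p :: "real \<times> real"
    obtain x y where p: "p = (x, y)" by (cases p)
    have e: "f u2 v2 p - f u2 v1 p - f u1 v2 p + f u1 v1 p
       = ((indicator {0..u2} x - indicator {0..u1} x) * (indicator {0..v2} y - indicator {0..v1} y)) * c p"
      unfolding f_def R_def p by (simp add: indicator_times algebra_simps)
    have "indicator {0..u1} x \<le> (indicator {0..u2} x :: real)" "indicator {0..v1} y \<le> (indicator {0..v2} y :: real)"
      using h by (auto simp: indicator_def)
    moreover have "0 \<le> c p" unfolding c_def by (rule cdens_nonneg)
    ultimately show "0 \<le> f u2 v2 p - f u2 v1 p - f u1 v2 p + f u1 v1 p"
      unfolding e by (intro mult_nonneg_nonneg) auto
  qed
  finally show "0 \<le> (LINT p:{0..u2} \<times> {0..v2}|lborel. cdens a b (fst p) (snd p)) -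
       (LINT p:{0..u2} \<times> {0..v1}|lborel. cdens a b (fst p) (snd p)) -
       (LINT p:{0..u1} \<times> {0..v2}|lborel. cdens a b (fst p) (snd p)) +
       (LINT p:{0..u1} \<times> {0..v1}|lborel. cdens a b (fst p) (snd p))" .
qed

end

theorem mainTheorem9:
  fixes \<alpha> \<beta> :: real
  assumes "0 \<le> \<alpha>" "\<alpha> < 1/2" "0 \<le> \<beta>" "\<beta> < 1/2"
  shows "(AE p in lborel. p \<in> {0..1} \<times> {0..1} \<longrightarrow> 0 \<le> cdens \<alpha> \<beta> (fst p) (snd p))
    \<and> (AE u in lborel. u \<in> {0..1} \<longrightarrow>
          set_integrable lborel {0..1} (\<lambda>v. cdens \<alpha> \<beta> u v) \<and>
          (LINT v:{0..1}|lborel. cdens \<alpha> \<beta> u v) = 1)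
    \<and> (AE v in lborel. v \<in> {0..1} \<longrightarrow>
          set_integrable lborel {0..1} (\<lambda>u. cdens \<alpha> \<beta> u v) \<and>
          (LINT u:{0..1}|lborel. cdens \<alpha> \<beta> u v) = 1)
    \<and> is_copula (\<lambda>u v. LINT p:{0..u} \<times> {0..v}|lborel. cdens \<alpha> \<beta> (fst p) (snd p))"
proof -
  interpret ab \<alpha> \<beta> using assms by unfold_locales
  show ?thesis using cdens_nonneg marg_v marg_u is_cop by (intro conjI AE_I2 impI) auto
qed

end
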